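(* Let $G$ be a reduced nilpotent $p$-group ($p$ prime) of unbounded period. Then there is a unimodular system of equations over $G$ which has no solution in $G$.
   Context: A group is reduced if it has no nontrivial divisible subgroups (divisible: every element has an $n$-th root for all $n\ge1$). Unbounded period means there is no $n\ge1$ with $g^n=1$ for all $g\in G$. An equation over $G$ in variables $\{x_j\}$ is $w=1$ with $w\in G*F(\{x_j\})$, $F$ free on the $x_j$; systems may be infinite, in infinitely many variables. A solution in $G$ is an assignment $x_j\mapsto g_j\in G$ making all equations hold. The system is unimodular if for every prime $q$ the rows of exponent sums of the variables in the equations are linearly independent over the field of order $q$ (every finite subset of rows is linearly independent). *)

theory Defs
  imports "HOL-Algebra.Algebra"
begin

definition gcomm :: "('a, 'b) monoid_scheme \<Rightarrow> 'a \<Rightarrow> 'a \<Rightarrow> 'a" where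
  "gcomm G x y = inv\<^bsub>G\<^esub> x \<otimes>\<^bsub>G\<^esub> inv\<^bsub>G\<^esub> y \<otimes>\<^bsub>G\<^esub> x \<otimes>\<^bsub>G\<^esub> y"

fun lower_central :: "('a, 'b) monoid_scheme \<Rightarrow> nat \<Rightarrow> 'a set" where
  "lower_central G 0 = carrier G"
| "lower_central G (Suc i) =
     generate G {gcomm G x y | x y. x \<in> lower_central G i \<and> y \<in> carrier G}"

definition nilpotent_group :: "('a, 'b) monoid_scheme \<Rightarrow> bool" where
  "nilpotent_group G \<longleftrightarrow> group G \<and> (\<exists>c. lower_central G c = {\<one>\<^bsub>G\<^esub>})"

definition p_group :: "nat \<Rightarrow> ('a, 'b) monoid_scheme \<Rightarrow> bool" where
  "p_group p G \<longleftrightarrow> (\<forall>g\<in>carrier G. \<exists>k::nat. g [^]\<^bsub>G\<^esub> (p ^ k) = \<one>\<^bsub>G\<^esub>)"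

definition divisible_subgroup :: "('a, 'b) monoid_scheme \<Rightarrow> 'a set \<Rightarrow> bool" where
  "divisible_subgroup G H \<longleftrightarrow> subgroup H G \<and>
     (\<forall>h\<in>H. \<forall>n::nat. n \<ge> 1 \<longrightarrow> (\<exists>r\<in>H. r [^]\<^bsub>G\<^esub> n = h))"

definition reduced_group :: "('a, 'b) monoid_scheme \<Rightarrow> bool" where
  "reduced_group G \<longleftrightarrow> (\<forall>H. divisible_subgroup G H \<longrightarrow> H = {\<one>\<^bsub>G\<^esub>})"

definition unbounded_period :: "('a, 'b) monoid_scheme \<Rightarrow> bool" where
  "unbounded_period G \<longleftrightarrow>
     \<not> (\<exists>n::nat. n \<ge> 1 \<and> (\<forall>g\<in>carrier G. g [^]\<^bsub>G\<^esub> n = \<one>\<^bsub>G\<^esub>))"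

text \<open>An element of G * F(X) is represented by a word: a list of letters, each
  either a constant Inl g (g in G) or Inr (x, True) = x, Inr (x, False) = x^-1.
  Evaluation under an assignment is the canonical homomorphism G * F(X) -> G
  (identity on G), so solutions and exponent sums do not depend on the
  representing word.\<close>

type_synonym ('a, 'v) letter = "'a + ('v \<times> bool)"
type_synonym ('a, 'v) word = "('a, 'v) letter list"

definition word_over :: "('a, 'b) monoid_scheme \<Rightarrow> ('a, 'v) word \<Rightarrow> bool" where
  "word_over G w \<longleftrightarrow> (\<forall>g. Inl g \<in> set w \<longrightarrow> g \<in> carrier G)"

fun eval_letter :: "('a, 'b) monoid_scheme \<Rightarrow> ('v \<Rightarrow> 'a) \<Rightarrow> ('a, 'v) letter \<Rightarrow> 'a" where
  "eval_letter G f (Inl g) = g"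
| "eval_letter G f (Inr (x, True)) = f x"
| "eval_letter G f (Inr (x, False)) = inv\<^bsub>G\<^esub> (f x)"

fun eval_word :: "('a, 'b) monoid_scheme \<Rightarrow> ('v \<Rightarrow> 'a) \<Rightarrow> ('a, 'v) word \<Rightarrow> 'a" where
  "eval_word G f [] = \<one>\<^bsub>G\<^esub>"
| "eval_word G f (l # w) = eval_letter G f l \<otimes>\<^bsub>G\<^esub> eval_word G f w"

fun exp_letter :: "'v \<Rightarrow> ('a, 'v) letter \<Rightarrow> int" where
  "exp_letter x (Inl g) = 0"
| "exp_letter x (Inr (y, b)) = (if y = x then (if b then 1 else -1) else 0)"

definition exp_sum :: "('a, 'v) word \<Rightarrow> 'v \<Rightarrow> int" where
  "exp_sum w x = sum_list (map (exp_letter x) w)"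

text \<open>A system is a set E of words (equations w = 1).\<close>
definition unimodular :: "('a, 'v) word set \<Rightarrow> bool" where
  "unimodular E \<longleftrightarrow>
    (\<forall>q::int. Factorial_Ring.prime q \<longrightarrow>
      (\<forall>S c. finite S \<and> S \<subseteq> E \<and>
         (\<forall>x. (\<Sum>w\<in>S. c w * exp_sum w x) mod q = 0)
         \<longrightarrow> (\<forall>w\<in>S. c w mod q = 0)))"

definition solution_in :: "('a, 'b) monoid_scheme \<Rightarrow> ('a, 'v) word set \<Rightarrow> ('v \<Rightarrow> 'a) \<Rightarrow> bool" where
  "solution_in G E f \<longleftrightarrow>
     (\<forall>x. f x \<in> carrier G) \<and> (\<forall>w\<in>E. eval_word G f w = \<one>\<^bsub>G\<^esub>)"

end

theory Submission
  imports Defs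
begin

lemma (in group) canc1[simp]: "x \<in> carrier G \<Longrightarrow> z \<in> carrier G \<Longrightarrow> x \<otimes> (inv x \<otimes> z) = z"
  by (simp add: m_assoc[symmetric])
lemma (in group) canc2[simp]: "x \<in> carrier G \<Longrightarrow> z \<in> carrier G \<Longrightarrow> inv x \<otimes> (x \<otimes> z) = z"
  by (simp add: m_assoc[symmetric])

lemma (in group) gcomm_closed[simp]: "x \<in> carrier G \<Longrightarrow> y \<in> carrier G \<Longrightarrow> gcomm G x y \<in> carrier G"
  by (simp add: gcomm_def)

lemma (in group) comm_swap: "x \<in> carrier G \<Longrightarrow> y \<in> carrier G \<Longrightarrow> x \<otimes> y = y \<otimes> x \<otimes> gcomm G x y"
  by (simp add: gcomm_def m_assoc)

lemma (in group) comm_mult1: "x \<in> carrier G \<Longrightarrow> x' \<in> carrier G \<Longrightarrow> y \<in> carrier G \<Longrightarrow>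
  gcomm G (x \<otimes> x') y = gcomm G x y \<otimes> gcomm G (gcomm G x y) x' \<otimes> gcomm G x' y"
  by (simp add: gcomm_def m_assoc inv_mult_group)

lemma (in group) comm_inv: "x \<in> carrier G \<Longrightarrow> y \<in> carrier G \<Longrightarrow> inv (gcomm G x y) = gcomm G y x"
  by (simp add: gcomm_def m_assoc inv_mult_group)

lemma (in group) conj_comm: "x \<in> carrier G \<Longrightarrow> g \<in> carrier G \<Longrightarrow> g \<otimes> x \<otimes> inv g = x \<otimes> gcomm G x (inv g)"
  by (simp add: gcomm_def m_assoc)

lemma (in group) gcomm_one1[simp]: "y \<in> carrier G \<Longrightarrow> gcomm G \<one> y = \<one>"
  by (simp add: gcomm_def)

lemma (in group) subgroup_nat_pow: "subgroup H G \<Longrightarrow> h \<in> H \<Longrightarrow> h [^] (n::nat) \<in> H"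
  using subgroup_int_pow_closed[of H h "int n"] by (simp add: int_pow_int)


lemma (in group) lc_normal: "lower_central G i \<lhd> G"
proof (induction i)
  case 0 then show ?case by (simp add: normal_self)
next
  case (Suc i)
  interpret N: normal "lower_central G i" G by (rule Suc.IH)
  define S where "S = {gcomm G x y | x y. x \<in> lower_central G i \<and> y \<in> carrier G}"
  have Ssub: "S \<subseteq> lower_central G i"
  proof
    fix c assume "c \<in> S"
    then obtain x y where c: "c = gcomm G x y" and x: "x \<in> lower_central G i" and y: "y \<in> carrier G"
      unfolding S_def by blast
    have xc: "x \<in> carrier G" using x N.subset by blast
    have "inv y \<otimes> x \<otimes> y \<in> lower_central G i" using N.inv_op_closed1[OF y x] .
    moreover have "inv x \<in> lower_central G i" using x by (rule N.m_inv_closed)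
    ultimately have "inv x \<otimes> (inv y \<otimes> x \<otimes> y) \<in> lower_central G i" by (metis N.m_closed)
    then show "c \<in> lower_central G i" using xc y by (simp add: c gcomm_def m_assoc)
  qed
  have Sc: "S \<subseteq> carrier G" using Ssub N.subset by blast
  have L: "lower_central G (Suc i) = generate G S" by (simp add: S_def)
  have sub: "generate G S \<subseteq> lower_central G i"
    by (rule generate_subgroup_incl[OF Ssub N.subgroup_axioms])
  show ?case unfolding L
  proof (rule normal_invI[OF generate_is_subgroup[OF Sc]])
    fix g h assume g: "g \<in> carrier G" and h: "h \<in> generate G S"
    have hi: "h \<in> lower_central G i" using h sub by blast
    have hc: "h \<in> carrier G" using hi N.subset by blast
    have "gcomm G h (inv g) \<in> S" unfolding S_def using hi g by blast
    then have "gcomm G h (inv g) \<in> generate G S" by (rule generate.incl)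
    then have "h \<otimes> gcomm G h (inv g) \<in> generate G S" using h by (metis generate.eng)
    then show "g \<otimes> h \<otimes> inv g \<in> generate G S" using conj_comm[OF hc g] by simp
  qed
qed

declare lower_central.simps(2)[simp del] one_FactGroup[simp del] mult_FactGroup[simp del]

context group begin

abbreviation "LC j \<equiv> lower_central G j"
abbreviation "QG j \<equiv> G Mod LC j"
abbreviation "hh j \<equiv> (\<lambda>a. LC j #> a)"

lemma lc_subgroup: "subgroup (LC j) G"
  using lc_normal normal_imp_subgroup by blast

lemma lc_carrier: "x \<in> LC j \<Longrightarrow> x \<in> carrier G"
  using lc_subgroup subgroup.subset by blast

lemma lc_comm: "x \<in> LC j \<Longrightarrow> y \<in> carrier G \<Longrightarrow> gcomm G x y \<in> LC (Suc j)"
  unfolding lower_central.simps(2) by (auto intro!: generate.incl)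

lemma lc_Suc_sub: "LC (Suc j) \<subseteq> LC j"
proof -
  interpret N: normal "LC j" G by (rule lc_normal)
  have Ssub: "{gcomm G x y | x y. x \<in> LC j \<and> y \<in> carrier G} \<subseteq> LC j"
  proof
    fix c assume "c \<in> {gcomm G x y | x y. x \<in> LC j \<and> y \<in> carrier G}"
    then obtain x y where c: "c = gcomm G x y" and x: "x \<in> LC j" and y: "y \<in> carrier G"
      by blast
    have xc: "x \<in> carrier G" using x N.subset by blast
    have "inv y \<otimes> x \<otimes> y \<in> LC j" using N.inv_op_closed1[OF y x] .
    moreover have "inv x \<in> LC j" using x by (rule N.m_inv_closed)
    ultimately have "inv x \<otimes> (inv y \<otimes> x \<otimes> y) \<in> LC j" by (metis N.m_closed)
    then show "c \<in> LC j" using xc y by (simp add: c gcomm_def m_assoc)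
  qed
  show ?thesis using generate_subgroup_incl[OF Ssub N.subgroup_axioms] by (simp add: lower_central.simps(2))
qed

lemma lc_mono: "i \<le> j \<Longrightarrow> LC j \<subseteq> LC i"
  by (induction j rule: dec_induct) (use lc_Suc_sub in blast)+

lemma hh_hom: "group_hom G (QG j) (hh j)"
proof -
  interpret N: normal "LC j" G by (rule lc_normal)
  show ?thesis unfolding group_hom_def group_hom_axioms_def
    using N.factorgroup_is_group N.r_coset_hom_Mod is_group by blast
qed

lemma QG_group: "group (QG j)"
  using hh_hom group_hom_def group_hom_axioms_def by blast

lemma hh_closed: "x \<in> carrier G \<Longrightarrow> hh j x \<in> carrier (QG j)"
  using group_hom.hom_closed[OF hh_hom] by blast

lemma hh_mult: "x \<in> carrier G \<Longrightarrow> y \<in> carrier G \<Longrightarrow> hh j (x \<otimes> y) = hh j x \<otimes>\<^bsub>QG j\<^esub> hh j y"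
  using group_hom.hom_mult[OF hh_hom] by blast

lemma hh_pow: "x \<in> carrier G \<Longrightarrow> hh j (x [^] (n::nat)) = hh j x [^]\<^bsub>QG j\<^esub> n"
  using group_hom.hom_nat_pow[OF hh_hom] by blast

lemma hh_inv: "x \<in> carrier G \<Longrightarrow> hh j (inv x) = inv\<^bsub>QG j\<^esub> (hh j x)"
  using group_hom.hom_inv[OF hh_hom] by blast

lemma hh_one_iff: "x \<in> carrier G \<Longrightarrow> (hh j x = \<one>\<^bsub>QG j\<^esub>) \<longleftrightarrow> x \<in> LC j"
proof -
  assume x: "x \<in> carrier G"
  have sg: "subgroup (LC j) G" by (rule lc_subgroup)
  show ?thesis
  proof
    assume "hh j x = \<one>\<^bsub>QG j\<^esub>"
    then have "LC j #> x = LC j" by (simp add: one_FactGroup)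
    then show "x \<in> LC j" using rcos_self[OF x sg] by simp
  next
    assume "x \<in> LC j"
    then show "hh j x = \<one>\<^bsub>QG j\<^esub>" using subgroup.rcos_const[OF sg is_group] by (simp add: one_FactGroup)
  qed
qed

lemma hh_one[simp]: "hh j \<one> = \<one>\<^bsub>QG j\<^esub>"
  using group_hom.hom_one[OF hh_hom] by blast

lemma hh_eq_iff: "x \<in> carrier G \<Longrightarrow> y \<in> carrier G \<Longrightarrow> hh j x = hh j y \<longleftrightarrow> inv x \<otimes> y \<in> LC j"
proof -
  assume x: "x \<in> carrier G" and y: "y \<in> carrier G"
  interpret Q: group "QG j" by (rule QG_group)
  have "hh j (inv x \<otimes> y) = inv\<^bsub>QG j\<^esub> (hh j x) \<otimes>\<^bsub>QG j\<^esub> hh j y"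
    using x y by (simp add: hh_mult hh_inv)
  then have "hh j (inv x \<otimes> y) = \<one>\<^bsub>QG j\<^esub> \<longleftrightarrow> hh j x = hh j y"
    using x y hh_closed by (metis Q.inv_closed Q.inv_comm Q.inv_equality Q.l_inv Q.r_inv)
  then show ?thesis using hh_one_iff[of "inv x \<otimes> y" j] x y by simp
qed

lemma central: "x \<in> LC j \<Longrightarrow> y \<in> carrier G \<Longrightarrow>
   hh (Suc j) x \<otimes>\<^bsub>QG (Suc j)\<^esub> hh (Suc j) y = hh (Suc j) y \<otimes>\<^bsub>QG (Suc j)\<^esub> hh (Suc j) x"
proof -
  assume x: "x \<in> LC j" and y: "y \<in> carrier G"
  have xc: "x \<in> carrier G" using x lc_carrier by blast
  interpret Q: group "QG (Suc j)" by (rule QG_group)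
  have c1: "hh (Suc j) (gcomm G x y) = \<one>\<^bsub>QG (Suc j)\<^esub>"
    using hh_one_iff[of "gcomm G x y" "Suc j"] lc_comm[OF x y] xc y by simp
  have "hh (Suc j) (x \<otimes> y) = hh (Suc j) (y \<otimes> x \<otimes> gcomm G x y)" using comm_swap[OF xc y] by simp
  also have "\<dots> = hh (Suc j) y \<otimes>\<^bsub>QG (Suc j)\<^esub> hh (Suc j) x"
    using xc y c1 by (simp add: hh_mult hh_closed)
  finally show ?thesis using xc y by (simp add: hh_mult)
qed

lemma pow_central: "g \<in> LC j \<Longrightarrow> a \<in> carrier G \<Longrightarrow>
   hh (Suc j) ((a \<otimes> g) [^] (n::nat)) = hh (Suc j) (a [^] n) \<otimes>\<^bsub>QG (Suc j)\<^esub> hh (Suc j) (g [^] n)"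
proof -
  assume g: "g \<in> LC j" and a: "a \<in> carrier G"
  have gc: "g \<in> carrier G" using g lc_carrier by blast
  interpret Q: group "QG (Suc j)" by (rule QG_group)
  have "hh (Suc j) ((a \<otimes> g) [^] n) = (hh (Suc j) a \<otimes>\<^bsub>QG (Suc j)\<^esub> hh (Suc j) g) [^]\<^bsub>QG (Suc j)\<^esub> n"
    using a gc by (simp add: hh_pow hh_mult)
  also have "\<dots> = hh (Suc j) a [^]\<^bsub>QG (Suc j)\<^esub> n \<otimes>\<^bsub>QG (Suc j)\<^esub> hh (Suc j) g [^]\<^bsub>QG (Suc j)\<^esub> n"
    by (rule Q.pow_mult_distrib) (use central[OF g a] a gc hh_closed in auto)
  finally show ?thesis using a gc by (simp add: hh_pow)
qed

lemma comm_hom1: "x \<in> LC j \<Longrightarrow> x' \<in> LC j \<Longrightarrow> y \<in> carrier G \<Longrightarrow>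
  hh (Suc (Suc j)) (gcomm G (x \<otimes> x') y) =
   hh (Suc (Suc j)) (gcomm G x y) \<otimes>\<^bsub>QG (Suc (Suc j))\<^esub> hh (Suc (Suc j)) (gcomm G x' y)"
proof -
  assume x: "x \<in> LC j" and x': "x' \<in> LC j" and y: "y \<in> carrier G"
  have xc: "x \<in> carrier G" "x' \<in> carrier G" using x x' lc_carrier by blast+
  interpret Q: group "QG (Suc (Suc j))" by (rule QG_group)
  have "gcomm G (gcomm G x y) x' \<in> LC (Suc (Suc j))"
    using lc_comm[OF lc_comm[OF x y] xc(2)] .
  then have c1: "hh (Suc (Suc j)) (gcomm G (gcomm G x y) x') = \<one>\<^bsub>QG (Suc (Suc j))\<^esub>"
    using hh_one_iff xc y by simp
  show ?thesis using comm_mult1[OF xc y] c1 xc y by (simp add: hh_mult hh_closed)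
qed

lemma comm_pow1: "x \<in> LC j \<Longrightarrow> y \<in> carrier G \<Longrightarrow>
  hh (Suc (Suc j)) (gcomm G (x [^] (n::nat)) y) = hh (Suc (Suc j)) (gcomm G x y) [^]\<^bsub>QG (Suc (Suc j))\<^esub> n"
proof (induction n)
  case 0
  then show ?case by simp
next
  case (Suc n)
  have xc: "x \<in> carrier G" using Suc.prems lc_carrier by blast
  have xn: "x [^] n \<in> LC j" using subgroup_nat_pow[OF lc_subgroup Suc.prems(1)] .
  show ?case using comm_hom1[OF xn Suc.prems(1) Suc.prems(2)] Suc.IH[OF Suc.prems] by simp
qed

end

context group begin

lemma gen_lemma:
  assumes gen: "\<And>a y. a \<in> LC j \<Longrightarrow> y \<in> carrier G \<Longrightarrow> gcomm G a y [^] (n::nat) \<in> LC (Suc (Suc j))"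
    and x: "x \<in> LC (Suc j)"
  shows "x [^] n \<in> LC (Suc (Suc j))"
proof -
  have sg: "subgroup (LC (Suc (Suc j))) G" by (rule lc_subgroup)
  have x': "x \<in> generate G {gcomm G x y | x y. x \<in> LC j \<and> y \<in> carrier G}"
    using x by (simp add: lower_central.simps(2))
  from x' show ?thesis
  proof (induction rule: generate.induct)
    case one
    then show ?case using subgroup.one_closed[OF sg] by simp
  next
    case (incl h)
    then show ?case using gen by blast
  next
    case (inv h)
    then obtain a y where h: "h = gcomm G a y" "a \<in> LC j" "y \<in> carrier G" by blast
    have hc: "h \<in> carrier G" using h lc_carrier by simp
    have "h [^] n \<in> LC (Suc (Suc j))" using gen h by blast
    then have "inv (h [^] n) \<in> LC (Suc (Suc j))" using subgroup.m_inv_closed[OF sg] by blast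
    then show ?case using nat_pow_inv[OF hc] by simp
  next
    case (eng h1 h2)
    have h1: "h1 \<in> LC (Suc j)" using eng(1) by (simp add: lower_central.simps(2))
    have h2: "h2 \<in> LC (Suc j)" using eng(2) by (simp add: lower_central.simps(2))
    have c: "h1 \<in> carrier G" "h2 \<in> carrier G" using h1 h2 lc_carrier by blast+
    have "hh (Suc (Suc j)) ((h1 \<otimes> h2) [^] n) =
      hh (Suc (Suc j)) (h1 [^] n) \<otimes>\<^bsub>QG (Suc (Suc j))\<^esub> hh (Suc (Suc j)) (h2 [^] n)"
      using pow_central[OF h2 c(1)] .
    also have "\<dots> = \<one>\<^bsub>QG (Suc (Suc j))\<^esub>"
    proof -
      interpret Q: group "QG (Suc (Suc j))" by (rule QG_group)
      have "hh (Suc (Suc j)) (h1 [^] n) = \<one>\<^bsub>QG (Suc (Suc j))\<^esub>"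
           "hh (Suc (Suc j)) (h2 [^] n) = \<one>\<^bsub>QG (Suc (Suc j))\<^esub>"
        using eng(3,4) c hh_one_iff by (metis nat_pow_closed)+
      then show ?thesis by simp
    qed
    finally show ?case using hh_one_iff c by (metis m_closed nat_pow_closed)
  qed
qed

end

locale nilp = group G for G (structure) +
  fixes p k :: nat
  assumes pg: "\<And>g. g \<in> carrier G \<Longrightarrow> \<exists>M. g [^] (p ^ M) = \<one>"
    and stat: "\<And>z. z \<in> carrier G \<Longrightarrow> \<exists>w\<in>carrier G.
         hh 1 z [^]\<^bsub>QG 1\<^esub> (p ^ k) = hh 1 w [^]\<^bsub>QG 1\<^esub> (p ^ Suc k)"
begin

lemma statm:
  assumes "k \<le> m" "z \<in> carrier G"
  shows "\<exists>w\<in>carrier G. hh 1 z [^]\<^bsub>QG 1\<^esub> (p ^ k) = hh 1 w [^]\<^bsub>QG 1\<^esub> (p ^ m)"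
  using assms(1)
proof (induction m rule: dec_induct)
  case base
  then show ?case using assms(2) by blast
next
  case (step m)
  interpret Q: group "QG 1" by (rule QG_group)
  from step.IH obtain w where w: "w \<in> carrier G" "hh 1 z [^]\<^bsub>QG 1\<^esub> (p ^ k) = hh 1 w [^]\<^bsub>QG 1\<^esub> (p ^ m)"
    by blast
  from stat[OF w(1)] obtain w' where w': "w' \<in> carrier G"
    "hh 1 w [^]\<^bsub>QG 1\<^esub> (p ^ k) = hh 1 w' [^]\<^bsub>QG 1\<^esub> (p ^ Suc k)" by blast
  have e1: "p ^ m = p ^ k * p ^ (m - k)" using step.hyps by (simp add: power_add[symmetric])
  have e2: "p ^ Suc m = p ^ Suc k * p ^ (m - k)" using step.hyps by (simp add: power_add[symmetric])
  have "hh 1 w [^]\<^bsub>QG 1\<^esub> (p ^ m) = hh 1 w [^]\<^bsub>QG 1\<^esub> (p ^ k * p ^ (m - k))"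
    by (simp only: e1)
  also have "\<dots> = (hh 1 w [^]\<^bsub>QG 1\<^esub> (p ^ k)) [^]\<^bsub>QG 1\<^esub> (p ^ (m - k))"
    by (rule Q.nat_pow_pow[symmetric, OF hh_closed[OF w(1)]])
  also have "\<dots> = (hh 1 w' [^]\<^bsub>QG 1\<^esub> (p ^ Suc k)) [^]\<^bsub>QG 1\<^esub> (p ^ (m - k))"
    using w' by simp
  also have "\<dots> = hh 1 w' [^]\<^bsub>QG 1\<^esub> (p ^ Suc k * p ^ (m - k))"
    by (rule Q.nat_pow_pow[OF hh_closed[OF w'(1)]])
  also have "\<dots> = hh 1 w' [^]\<^bsub>QG 1\<^esub> (p ^ Suc m)"
    by (simp only: e2)
  finally show ?case using w w' by metis
qed

lemma base_comm:
  assumes a: "a \<in> carrier G" and y: "y \<in> carrier G"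
  shows "gcomm G a y [^] (p ^ k) \<in> LC (Suc (Suc 0))"
proof -
  interpret Q: group "QG (Suc (Suc 0))" by (rule QG_group)
  let ?h = "hh (Suc (Suc 0))"
  obtain M where M: "y [^] (p ^ M) = \<one>" using pg[OF y] by blast
  define m where "m = k + M"
  have ym: "y [^] (p ^ m) = \<one>"
    using M y by (simp add: m_def power_add nat_pow_pow[symmetric] mult.commute)
  obtain w where w: "w \<in> carrier G" "hh 1 a [^]\<^bsub>QG 1\<^esub> (p ^ k) = hh 1 w [^]\<^bsub>QG 1\<^esub> (p ^ m)"
    using statm[of m a] a m_def by auto
  have "hh 1 (w [^] (p ^ m)) = hh 1 (a [^] (p ^ k))" using w a by (simp add: hh_pow)
  then have gin: "inv (w [^] (p ^ m)) \<otimes> a [^] (p ^ k) \<in> LC 1"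
    using hh_eq_iff w a by simp
  define g where "g = inv (w [^] (p ^ m)) \<otimes> a [^] (p ^ k)"
  have gc: "g \<in> carrier G" using w a g_def by simp
  have ak: "a [^] (p ^ k) = w [^] (p ^ m) \<otimes> g" using w a by (simp add: g_def m_assoc[symmetric])
  have a0: "a \<in> LC 0" using a by simp
  have "?h (gcomm G a y [^] (p ^ k)) = ?h (gcomm G a y) [^]\<^bsub>QG (Suc (Suc 0))\<^esub> (p ^ k)"
    using a y by (simp add: hh_pow)
  also have "\<dots> = ?h (gcomm G (a [^] (p ^ k)) y)" using comm_pow1[OF a0 y] by simp
  also have "\<dots> = ?h (gcomm G (w [^] (p ^ m)) y) \<otimes>\<^bsub>QG (Suc (Suc 0))\<^esub> ?h (gcomm G g y)"
    using ak comm_hom1[of "w [^] (p ^ m)" 0 g y] w gc y by simp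
  also have "?h (gcomm G g y) = \<one>\<^bsub>QG (Suc (Suc 0))\<^esub>"
    using hh_one_iff lc_comm[of g 1 y] gin g_def gc y by simp
  also have "?h (gcomm G (w [^] (p ^ m)) y) = ?h (gcomm G w y) [^]\<^bsub>QG (Suc (Suc 0))\<^esub> (p ^ m)"
    using comm_pow1[of w 0 y] w y by simp
  also have "?h (gcomm G w y) = inv\<^bsub>QG (Suc (Suc 0))\<^esub> ?h (gcomm G y w)"
    using comm_inv[OF y w(1)] hh_inv w y by (metis gcomm_closed)
  also have "(inv\<^bsub>QG (Suc (Suc 0))\<^esub> ?h (gcomm G y w)) [^]\<^bsub>QG (Suc (Suc 0))\<^esub> (p ^ m)
      = inv\<^bsub>QG (Suc (Suc 0))\<^esub> (?h (gcomm G y w) [^]\<^bsub>QG (Suc (Suc 0))\<^esub> (p ^ m))"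
    using Q.nat_pow_inv hh_closed w y by simp
  also have "?h (gcomm G y w) [^]\<^bsub>QG (Suc (Suc 0))\<^esub> (p ^ m) = ?h (gcomm G (y [^] (p ^ m)) w)"
    using comm_pow1[of y 0 w] w y by simp
  also have "\<dots> = \<one>\<^bsub>QG (Suc (Suc 0))\<^esub>" using ym w by simp
  finally have "?h (gcomm G a y [^] (p ^ k)) = \<one>\<^bsub>QG (Suc (Suc 0))\<^esub>" by simp
  then show ?thesis using hh_one_iff a y by simp
qed

lemma powlc: "x \<in> LC (Suc j) \<Longrightarrow> x [^] (p ^ k) \<in> LC (Suc (Suc j))"
proof (induction j arbitrary: x)
  case 0
  show ?case
    by (rule gen_lemma[OF _ 0]) (use base_comm lc_carrier in auto)
next
  case (Suc j)
  show ?case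
  proof (rule gen_lemma[OF _ Suc.prems])
    fix a y assume a: "a \<in> LC (Suc j)" and y: "y \<in> carrier G"
    have ac: "a \<in> carrier G" using a lc_carrier by blast
    have "a [^] (p ^ k) \<in> LC (Suc (Suc j))" using Suc.IH[OF a] .
    then have "gcomm G (a [^] (p ^ k)) y \<in> LC (Suc (Suc (Suc j)))" using lc_comm y by blast
    then have "hh (Suc (Suc (Suc j))) (gcomm G (a [^] (p ^ k)) y) = \<one>\<^bsub>QG (Suc (Suc (Suc j)))\<^esub>"
      using hh_one_iff ac y by simp
    then have "hh (Suc (Suc (Suc j))) (gcomm G a y [^] (p ^ k)) = \<one>\<^bsub>QG (Suc (Suc (Suc j)))\<^esub>"
      using comm_pow1[OF a y] ac y by (simp add: hh_pow)
    then show "gcomm G a y [^] (p ^ k) \<in> LC (Suc (Suc (Suc j)))" using hh_one_iff ac y by simp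
  qed
qed

end

lemma root_exp:
  fixes p n E :: nat and a :: int
  assumes p: "Factorial_Ring.prime p" and n: "n \<ge> 1"
  shows "\<exists>s r::int. s * int n = a * int (p ^ n) + int (p ^ E) * r"
proof -
  define d where "d = gcd n (p ^ E)"
  have "d dvd p ^ E" unfolding d_def by simp
  then obtain t where t: "t \<le> E" "d = p ^ t" using divides_primepow_nat[OF p] by blast
  have "d dvd n" unfolding d_def by simp
  then have "p ^ t \<le> n" using t n by (simp add: dvd_imp_le)
  moreover have "n < 2 ^ n" by (rule less_exp)
  moreover have "(2::nat) ^ n \<le> p ^ n" using prime_ge_2_nat[OF p] by (simp add: power_mono)
  ultimately have "p ^ t < p ^ n" by linarith
  then have "t < n" using power_less_imp_less_exp prime_gt_1_nat[OF p] by blast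
  then have "d dvd p ^ n" using t by (simp add: le_imp_power_dvd)
  then obtain e where e: "p ^ n = d * e" by (auto simp: dvd_def)
  obtain u v where uv: "u * int n + v * int (p ^ E) = gcd (int n) (int (p ^ E))" using bezout_int by blast
  have g: "gcd (int n) (int (p ^ E)) = int d" unfolding d_def by (simp only: gcd_int_int_eq)
  have un: "u * int n = int d - v * int (p ^ E)" using uv g by simp
  have "(u * a * int e) * int n = a * int (p ^ n) + int (p ^ E) * (- v * a * int e)"
  proof -
    have "(u * a * int e) * int n = a * int e * (u * int n)" by (simp add: algebra_simps)
    also have "\<dots> = a * int e * (int d - v * int (p ^ E))" by (simp only: un)
    also have "\<dots> = a * int (p ^ n) + int (p ^ E) * (- v * a * int e)" using e by (simp add: algebra_simps)
    finally show ?thesis .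
  qed
  then show ?thesis by blast
qed

context group begin

lemma chain_pow:
  assumes u: "\<And>i. u i \<in> carrier G" "\<And>i. u i = u (Suc i) [^] (p::nat)"
    and ij: "i \<le> j"
  shows "u i = u j [^] (p ^ (j - i))"
  using ij
proof (induction j rule: dec_induct)
  case base then show ?case using u(1)[of i] by simp
next
  case (step j)
  have "u j [^] (p ^ (j - i)) = (u (Suc j) [^] p) [^] (p ^ (j - i))" using u(2)[of j] by simp
  also have "\<dots> = u (Suc j) [^] (p * p ^ (j - i))" using u(1) nat_pow_pow by simp
  also have "p * p ^ (j - i) = p ^ (Suc j - i)" using step.hyps by (simp add: Suc_diff_le)
  finally show ?case using step.IH by simp
qed

lemma chain_int_pow:
  assumes u: "\<And>i. u i \<in> carrier G" "\<And>i. u i = u (Suc i) [^] (p::nat)"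
    and ij: "i \<le> j"
  shows "u i [^] (a::int) = u j [^] (int (p ^ (j - i)) * a)"
proof -
  have "u i [^] a = (u j [^] int (p ^ (j - i))) [^] a" using chain_pow[of u p i j, OF u ij] by (simp only: int_pow_int)
  also have "\<dots> = u j [^] (int (p ^ (j - i)) * a)" using int_pow_pow u(1) by simp
  finally show ?thesis .
qed

lemma chain_trivial:
  assumes p: "Factorial_Ring.prime p"
    and pg: "p_group p G" and red: "reduced_group G"
    and u: "\<And>i. u i \<in> carrier G" "\<And>i. u i = u (Suc i) [^] (p::nat)"
  shows "u 0 = \<one>"
proof -
  define H where "H = {g. \<exists>i (a::int). g = u i [^] a}"
  have Hc: "H \<subseteq> carrier G" unfolding H_def using u(1) by auto
  have sg: "subgroup H G"
  proof (rule subgroupI[OF Hc])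
    show "H \<noteq> {}" unfolding H_def by blast
  next
    fix g assume "g \<in> H"
    then obtain i a where "g = u i [^] (a::int)" unfolding H_def by blast
    then have "inv g = u i [^] (- a)" using u(1) int_pow_neg by simp
    then show "inv g \<in> H" unfolding H_def by blast
  next
    fix g g' assume "g \<in> H" "g' \<in> H"
    then obtain i a i' a' where g: "g = u i [^] (a::int)" "g' = u i' [^] (a'::int)" unfolding H_def by blast
    define m where "m = max i i'"
    have "g = u m [^] (int (p ^ (m - i)) * a)" using g chain_int_pow[of u p i m a, OF u] m_def by simp
    moreover have "g' = u m [^] (int (p ^ (m - i')) * a')" using g chain_int_pow[of u p i' m a', OF u] m_def by simp
    ultimately have "g \<otimes> g' = u m [^] (int (p ^ (m - i)) * a + int (p ^ (m - i')) * a')"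
      using int_pow_mult u(1) by simp
    then show "g \<otimes> g' \<in> H" unfolding H_def by blast
  qed
  have div: "divisible_subgroup G H"
    unfolding divisible_subgroup_def
  proof (intro conjI sg ballI allI impI)
    fix h and n :: nat assume h: "h \<in> H" and n: "n \<ge> 1"
    then obtain i a where ha: "h = u i [^] (a::int)" unfolding H_def by blast
    obtain E where E: "u (i + n) [^] (p ^ E) = \<one>" using pg u(1) unfolding p_group_def by blast
    obtain s r where sr: "s * int n = a * int (p ^ n) + int (p ^ E) * r"
      using root_exp[OF p n, of a E] by blast
    let ?y = "u (i + n)"
    have h2: "h = ?y [^] (a * int (p ^ n))"
      using ha chain_int_pow[of u p i "i + n" a, OF u] by (simp add: mult.commute)
    have "(?y [^] s) [^] n = ?y [^] (s * int n)"
      using int_pow_pow[of ?y s "int n"] u(1) by (simp add: int_pow_int)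
    also have "\<dots> = ?y [^] (a * int (p ^ n)) \<otimes> (?y [^] int (p ^ E)) [^] r"
      using sr int_pow_mult int_pow_pow u(1) by simp
    also have "(?y [^] int (p ^ E)) [^] r = \<one>"
      using E by (simp only: int_pow_int) simp
    also have "?y [^] (a * int (p ^ n)) \<otimes> \<one> = h" using h2 u(1) by simp
    finally show "\<exists>r\<in>H. r [^] n = h" unfolding H_def by blast
  qed
  then have "H = {\<one>}" using red unfolding reduced_group_def by blast
  moreover have "u 0 \<in> H"
  proof -
    have "u 0 = u 0 [^] (1::int)" using u(1)[of 0] by simp
    then show ?thesis unfolding H_def by blast
  qed
  ultimately show ?thesis by blast
qed

end

context nilp begin

lemma root_step:
  assumes x: "x \<in> carrier G" and z: "z \<in> carrier G" and xz: "hh 1 x = hh 1 z [^]\<^bsub>QG 1\<^esub> (p ^ k)"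
  shows "\<exists>y\<in>carrier G. (\<exists>z\<in>carrier G. hh 1 y = hh 1 z [^]\<^bsub>QG 1\<^esub> (p ^ k)) \<and> hh 1 x = hh 1 y [^]\<^bsub>QG 1\<^esub> p"
proof -
  interpret Q: group "QG 1" by (rule QG_group)
  obtain w where w: "w \<in> carrier G" "hh 1 z [^]\<^bsub>QG 1\<^esub> (p ^ k) = hh 1 w [^]\<^bsub>QG 1\<^esub> (p ^ Suc k)"
    using stat[OF z] by blast
  have "hh 1 w [^]\<^bsub>QG 1\<^esub> (p ^ Suc k) = (hh 1 w [^]\<^bsub>QG 1\<^esub> (p ^ k)) [^]\<^bsub>QG 1\<^esub> p"
    using Q.nat_pow_pow[OF hh_closed[OF w(1)], of "p ^ k" p] by (simp add: mult.commute)
  also have "\<dots> = hh 1 (w [^] (p ^ k)) [^]\<^bsub>QG 1\<^esub> p" using w(1) by (simp add: hh_pow)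
  finally have "hh 1 x = hh 1 (w [^] (p ^ k)) [^]\<^bsub>QG 1\<^esub> p" using xz w by simp
  moreover have "hh 1 (w [^] (p ^ k)) = hh 1 w [^]\<^bsub>QG 1\<^esub> (p ^ k)" using w(1) by (simp add: hh_pow)
  ultimately show ?thesis using w(1) by blast
qed

lemma bounded_from_stat:
  assumes p: "Factorial_Ring.prime p" and pgr: "p_group p G" and red: "reduced_group G"
    and c: "LC (Suc c) = {\<one>}"
  shows "\<exists>n::nat. n \<ge> 1 \<and> (\<forall>g\<in>carrier G. g [^] n = \<one>)"
proof -
  define P where "P y \<longleftrightarrow> y \<in> carrier G \<and> (\<exists>z\<in>carrier G. hh 1 y = hh 1 z [^]\<^bsub>QG 1\<^esub> (p ^ k))" for y
  define R where "R x = (SOME y. P y \<and> hh 1 x = hh 1 y [^]\<^bsub>QG 1\<^esub> p)" for x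
  have Rp: "P (R x) \<and> hh 1 x = hh 1 (R x) [^]\<^bsub>QG 1\<^esub> p" if "P x" for x
  proof -
    from that obtain z where xz: "x \<in> carrier G" "z \<in> carrier G" "hh 1 x = hh 1 z [^]\<^bsub>QG 1\<^esub> (p ^ k)"
      unfolding P_def by blast
    obtain y where y: "y \<in> carrier G" "\<exists>z\<in>carrier G. hh 1 y = hh 1 z [^]\<^bsub>QG 1\<^esub> (p ^ k)"
      "hh 1 x = hh 1 y [^]\<^bsub>QG 1\<^esub> p"
      using root_step[OF xz] by blast
    have "P y" unfolding P_def using y(1,2) by blast
    then have "\<exists>y. P y \<and> hh 1 x = hh 1 y [^]\<^bsub>QG 1\<^esub> p" using y(3) by blast
    then show ?thesis unfolding R_def by (rule someI_ex)
  qed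
  have bnd: "x [^] (p ^ (k * c)) = \<one>" if Px: "P x" for x
  proof -
    define y where "y i = (R ^^ i) x" for i
    have Py: "P (y i)" for i by (induction i) (use Px Rp in \<open>auto simp: y_def\<close>)
    have yc: "y i \<in> carrier G" for i using Py P_def by blast
    have yrel: "hh 1 (y i) = hh 1 (y (Suc i)) [^]\<^bsub>QG 1\<^esub> p" for i
      using Rp[OF Py[of i]] by (simp add: y_def)
    have refine: "hh (Suc j) (y i [^] (p ^ (k * j))) = hh (Suc j) ((y (Suc i) [^] (p ^ (k * j))) [^] p)" for j i
    proof (induction j arbitrary: i)
      case 0
      then show ?case using yrel[of i] yc by (simp add: hh_pow)
    next
      case (Suc j)
      define u where "u i = y i [^] (p ^ (k * j))" for i
      have uc: "u i \<in> carrier G" for i using yc u_def by simp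
      define g where "g = inv (u (Suc i) [^] p) \<otimes> u i"
      have "hh (Suc j) (u (Suc i) [^] p) = hh (Suc j) (u i)" using Suc.IH[of i] u_def by simp
      then have gin: "g \<in> LC (Suc j)" using hh_eq_iff[of "u (Suc i) [^] p" "u i" "Suc j"] uc g_def by simp
      have gc: "g \<in> carrier G" using gin lc_carrier by blast
      have ui: "u i = u (Suc i) [^] p \<otimes> g" using uc by (simp add: g_def m_assoc[symmetric])
      have e1: "y i [^] (p ^ (k * Suc j)) = u i [^] (p ^ k)"
        using yc by (simp add: u_def nat_pow_pow power_add mult.commute)
      have e2: "y (Suc i) [^] (p ^ (k * Suc j)) = u (Suc i) [^] (p ^ k)"
        using yc by (simp add: u_def nat_pow_pow power_add mult.commute)
      have "hh (Suc (Suc j)) (u i [^] (p ^ k)) =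
         hh (Suc (Suc j)) ((u (Suc i) [^] p) [^] (p ^ k)) \<otimes>\<^bsub>QG (Suc (Suc j))\<^esub> hh (Suc (Suc j)) (g [^] (p ^ k))"
        unfolding ui using pow_central[OF gin] uc by simp
      also have "hh (Suc (Suc j)) (g [^] (p ^ k)) = \<one>\<^bsub>QG (Suc (Suc j))\<^esub>"
        using powlc[OF gin] hh_one_iff gc by simp
      also have "(u (Suc i) [^] p) [^] (p ^ k) = (u (Suc i) [^] (p ^ k)) [^] p"
        using uc by (simp add: nat_pow_pow mult.commute)
      finally show ?case
      proof -
        interpret Qs: group "QG (Suc (Suc j))" by (rule QG_group)
        assume "hh (Suc (Suc j)) (u i [^] p ^ k) =
          hh (Suc (Suc j)) ((u (Suc i) [^] p ^ k) [^] p) \<otimes>\<^bsub>QG (Suc (Suc j))\<^esub> \<one>\<^bsub>QG (Suc (Suc j))\<^esub>"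
        then show ?thesis using e1 e2 uc hh_closed by simp
      qed
    qed
    define w where "w i = y i [^] (p ^ (k * c))" for i
    have wc: "w i \<in> carrier G" for i using yc w_def by simp
    have wrel: "w i = w (Suc i) [^] p" for i
    proof -
      have "hh (Suc c) (w i) = hh (Suc c) (w (Suc i) [^] p)" using refine[of c i] w_def by simp
      then have "inv (w i) \<otimes> w (Suc i) [^] p \<in> LC (Suc c)" using hh_eq_iff wc by simp
      then have eq: "inv (w i) \<otimes> w (Suc i) [^] p = \<one>" using c by simp
      have "w (Suc i) [^] p = w i \<otimes> (inv (w i) \<otimes> w (Suc i) [^] p)" using wc by simp
      then show ?thesis using eq wc by simp
    qed
    have "w 0 = \<one>" by (rule chain_trivial[of p w, OF p pgr red wc wrel])
    then show ?thesis by (simp add: w_def y_def)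
  qed
  have "\<forall>g\<in>carrier G. g [^] (p ^ k * p ^ (k * c)) = \<one>"
  proof
    fix g assume g: "g \<in> carrier G"
    have "P (g [^] (p ^ k))" unfolding P_def using g by (auto simp: hh_pow)
    then have "(g [^] (p ^ k)) [^] (p ^ (k * c)) = \<one>" by (rule bnd)
    then show "g [^] (p ^ k * p ^ (k * c)) = \<one>" using g by (simp add: nat_pow_pow)
  qed
  moreover have "p ^ k * p ^ (k * c) \<ge> 1" using prime_gt_0_nat[OF p] by simp
  ultimately show ?thesis by blast
qed

end

definition Wd :: "(nat \<Rightarrow> 'a) \<Rightarrow> nat \<Rightarrow> nat \<Rightarrow> ('a, nat) word" where
  "Wd a p i = Inr (i, False) # Inl (a i) # replicate p (Inr (Suc i, True))"

lemma exp_sum_Wd: "exp_sum (Wd a p i) x = (if i = x then -1 else 0) + (if Suc i = x then int p else 0)"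
  by (simp add: Wd_def exp_sum_def sum_list_replicate)

lemma Wd_inj: "inj (Wd a p)"
  by (rule injI) (simp add: Wd_def)

lemma unimodular_Wd:
  shows "unimodular (range (Wd a p))"
  unfolding unimodular_def
proof (intro allI impI ballI)
  fix q :: int and S c w
  assume q: "Factorial_Ring.prime q"
    and H: "finite S \<and> S \<subseteq> range (Wd a p) \<and> (\<forall>x. (\<Sum>w\<in>S. c w * exp_sum w x) mod q = 0)"
    and w: "w \<in> S"
  define I where "I = Wd a p -` S"
  have SI: "S = Wd a p ` I" using H unfolding I_def by blast
  have fI: "finite I" unfolding I_def using H Wd_inj[of a p] finite_vimageI[of S "Wd a p"] by blast
  define d where "d i = (if i \<in> I then c (Wd a p i) else 0)" for i
  have col: "(\<Sum>w\<in>S. c w * exp_sum w x) = - d x + (case x of 0 \<Rightarrow> 0 | Suc x' \<Rightarrow> int p * d x')" for x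
  proof -
    have "(\<Sum>w\<in>S. c w * exp_sum w x) = (\<Sum>i\<in>I. c (Wd a p i) * exp_sum (Wd a p i) x)"
      unfolding SI by (rule sum.reindex_cong[OF inj_on_subset[OF Wd_inj]]) auto
    also have "\<dots> = (\<Sum>i\<in>I. (if i = x then - c (Wd a p i) else 0) + (if Suc i = x then int p * c (Wd a p i) else 0))"
      by (rule sum.cong) (auto simp: exp_sum_Wd)
    also have "\<dots> = (\<Sum>i\<in>I. (if i = x then - c (Wd a p i) else 0)) + (\<Sum>i\<in>I. (if Suc i = x then int p * c (Wd a p i) else 0))"
      by (rule sum.distrib)
    also have "(\<Sum>i\<in>I. (if i = x then - c (Wd a p i) else 0)) = - d x"
      using fI by (simp add: d_def)
    also have "(\<Sum>i\<in>I. (if Suc i = x then int p * c (Wd a p i) else 0)) = (case x of 0 \<Rightarrow> 0 | Suc x' \<Rightarrow> int p * d x')"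
    proof (cases x)
      case 0 then show ?thesis by simp
    next
      case (Suc x')
      then show ?thesis using fI by (simp add: d_def)
    qed
    finally show ?thesis .
  qed
  have dz: "d j mod q = 0" for j
  proof (induction j)
    case 0
    have "(\<Sum>w\<in>S. c w * exp_sum w 0) mod q = 0" using H by blast
    then have "(- d 0) mod q = 0" using col[of 0] by simp
    then show ?case by (simp add: mod_eq_0_iff_dvd)
  next
    case (Suc j)
    have "(\<Sum>w\<in>S. c w * exp_sum w (Suc j)) mod q = 0" using H by blast
    then have "(- d (Suc j) + int p * d j) mod q = 0" using col[of "Suc j"] by simp
    then have h1: "q dvd (- d (Suc j) + int p * d j)" by (simp add: mod_eq_0_iff_dvd)
    have h2: "q dvd int p * d j" using Suc.IH by (simp add: mod_eq_0_iff_dvd)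
    have "q dvd (int p * d j - (- d (Suc j) + int p * d j))" by (rule dvd_diff[OF h2 h1])
    then have "q dvd d (Suc j)" by simp
    then show ?case by (simp add: mod_eq_0_iff_dvd)
  qed
  from w SI obtain i where i: "i \<in> I" "w = Wd a p i" by blast
  show "c w mod q = 0" using dz[of i] i by (simp add: d_def)
qed

primrec iter_idx :: "(nat \<Rightarrow> 'x \<Rightarrow> 'x) \<Rightarrow> 'x \<Rightarrow> nat \<Rightarrow> 'x" where
  "iter_idx F e 0 = e"
| "iter_idx F e (Suc i) = F i (iter_idx F e i)"

lemma (in group) eval_rep:
  assumes "f y \<in> carrier G"
  shows "eval_word G f (replicate n (Inr (y, True))) = f y [^] n"
  using assms
proof (induction n)
  case 0 then show ?case by simp
next
  case (Suc n)
  then show ?case using nat_pow_Suc2[of "f y" n] by simp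
qed

lemma (in group) eval_Wd:
  assumes "\<And>x. f x \<in> carrier G" "a i \<in> carrier G"
  shows "eval_word G f (Wd a p i) = inv (f i) \<otimes> (a i \<otimes> f (Suc i) [^] p)"
  using assms by (simp add: Wd_def eval_rep)

declare One_nat_def[simp del]

lemma (in group) main_aux:
  fixes p :: nat and c :: nat
  assumes p: "Factorial_Ring.prime p"
    and c: "LC c = {\<one>}"
    and pgr: "p_group p G"
    and red: "reduced_group G"
    and unb: "unbounded_period G"
  shows "\<exists>E :: ('a, nat) word set.
           (\<forall>w\<in>E. word_over G w) \<and> unimodular E \<and> \<not> (\<exists>f. solution_in G E f)"
proof -
  have c': "LC (Suc c) = {\<one>}"
    using lc_Suc_sub[of c] c subgroup.one_closed[OF lc_subgroup[of "Suc c"]] by blast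
  have pg': "\<And>g. g \<in> carrier G \<Longrightarrow> \<exists>M. g [^] (p ^ M) = \<one>"
    using pgr unfolding p_group_def by blast
  have nonstat: "\<exists>z\<in>carrier G. \<forall>w\<in>carrier G.
      hh 1 z [^]\<^bsub>QG 1\<^esub> (p ^ k) \<noteq> hh 1 w [^]\<^bsub>QG 1\<^esub> (p ^ Suc k)" for k
  proof (rule ccontr)
    assume "\<not> ?thesis"
    then have stat: "\<And>z. z \<in> carrier G \<Longrightarrow> \<exists>w\<in>carrier G.
         hh 1 z [^]\<^bsub>QG 1\<^esub> (p ^ k) = hh 1 w [^]\<^bsub>QG 1\<^esub> (p ^ Suc k)" by blast
    interpret N: nilp G p k
      by unfold_locales (use pg' stat in blast)+
    obtain n :: nat where "n \<ge> 1" "\<forall>g\<in>carrier G. g [^] n = \<one>"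
      using N.bounded_from_stat[OF p pgr red c'] by blast
    then show False using unb unfolding unbounded_period_def by blast
  qed
  have Qc: "comm_group (QG 1)"
  proof (rule group.group_comm_groupI[OF QG_group])
    fix U V assume U: "U \<in> carrier (QG 1)" and V: "V \<in> carrier (QG 1)"
    obtain x where x: "x \<in> carrier G" "U = hh 1 x" using U by (auto simp: carrier_FactGroup)
    obtain y where y: "y \<in> carrier G" "V = hh 1 y" using V by (auto simp: carrier_FactGroup)
    show "U \<otimes>\<^bsub>QG 1\<^esub> V = V \<otimes>\<^bsub>QG 1\<^esub> U" using central[of x 0 y] x y by (simp add: One_nat_def)
  qed
  interpret Q: comm_group "QG 1" by (rule Qc)
  define b where "b k = (SOME z. z \<in> carrier G \<and> (\<forall>w\<in>carrier G.
      hh 1 z [^]\<^bsub>QG 1\<^esub> (p ^ k) \<noteq> hh 1 w [^]\<^bsub>QG 1\<^esub> (p ^ Suc k)))" for k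
  have b: "b k \<in> carrier G \<and> (\<forall>w\<in>carrier G.
      hh 1 (b k) [^]\<^bsub>QG 1\<^esub> (p ^ k) \<noteq> hh 1 w [^]\<^bsub>QG 1\<^esub> (p ^ Suc k))" for k
    unfolding b_def by (rule someI_ex) (use nonstat[of k] in blast)
  define A where "A i t = (if \<exists>w\<in>carrier G. hh 1 t [^]\<^bsub>QG 1\<^esub> (p ^ i) = hh 1 w [^]\<^bsub>QG 1\<^esub> (p ^ Suc (2 * i))
      then b (2 * i) else \<one>)" for i t
  define s where "s = iter_idx (\<lambda>i t. t \<otimes> A i t [^] (p ^ i)) \<one>"
  define a where "a i = A i (s i)" for i
  have Ac: "A i t \<in> carrier G" for i t using b by (simp add: A_def)
  have ac: "a i \<in> carrier G" for i using Ac by (simp add: a_def)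
  have s0: "s 0 = \<one>" by (simp add: s_def)
  have sSuc: "s (Suc i) = s i \<otimes> a i [^] (p ^ i)" for i by (simp add: s_def a_def)
  have sc: "s i \<in> carrier G" for i by (induction i) (simp_all add: s0 sSuc ac)
  have sinv: "hh 1 (s (Suc i)) [^]\<^bsub>QG 1\<^esub> (p ^ i) \<noteq> hh 1 w [^]\<^bsub>QG 1\<^esub> (p ^ Suc (2 * i))"
    if w: "w \<in> carrier G" for i w
  proof (cases "\<exists>w\<in>carrier G. hh 1 (s i) [^]\<^bsub>QG 1\<^esub> (p ^ i) = hh 1 w [^]\<^bsub>QG 1\<^esub> (p ^ Suc (2 * i))")
    case True
    then obtain w0 where w0: "w0 \<in> carrier G"
      "hh 1 (s i) [^]\<^bsub>QG 1\<^esub> (p ^ i) = hh 1 w0 [^]\<^bsub>QG 1\<^esub> (p ^ Suc (2 * i))" by blast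
    have ai: "a i = b (2 * i)" using True by (simp add: a_def A_def)
    let ?B = "hh 1 (b (2 * i))"
    have Bc: "?B \<in> carrier (QG 1)" using b hh_closed by blast
    have sc1: "hh 1 (s i) \<in> carrier (QG 1)" using sc hh_closed by blast
    have w0c: "hh 1 w0 \<in> carrier (QG 1)" using w0 hh_closed by blast
    have wc: "hh 1 w \<in> carrier (QG 1)" using w hh_closed by blast
    have pp: "p ^ i * p ^ i = p ^ (2 * i)" by (simp add: power_add[symmetric] mult_2)
    show ?thesis
    proof
      assume eq: "hh 1 (s (Suc i)) [^]\<^bsub>QG 1\<^esub> (p ^ i) = hh 1 w [^]\<^bsub>QG 1\<^esub> (p ^ Suc (2 * i))"
      have hs: "hh 1 (s (Suc i)) = hh 1 (s i) \<otimes>\<^bsub>QG 1\<^esub> ?B [^]\<^bsub>QG 1\<^esub> (p ^ i)"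
        using sSuc[of i] ai sc b by (simp add: hh_mult hh_pow)
      have "hh 1 (s (Suc i)) [^]\<^bsub>QG 1\<^esub> (p ^ i)
          = (hh 1 (s i) \<otimes>\<^bsub>QG 1\<^esub> ?B [^]\<^bsub>QG 1\<^esub> (p ^ i)) [^]\<^bsub>QG 1\<^esub> (p ^ i)"
        by (simp only: hs)
      also have "\<dots> = hh 1 (s i) [^]\<^bsub>QG 1\<^esub> (p ^ i) \<otimes>\<^bsub>QG 1\<^esub> (?B [^]\<^bsub>QG 1\<^esub> (p ^ i)) [^]\<^bsub>QG 1\<^esub> (p ^ i)"
        by (rule Q.nat_pow_distrib[OF sc1 Q.nat_pow_closed[OF Bc]])
      also have "(?B [^]\<^bsub>QG 1\<^esub> (p ^ i)) [^]\<^bsub>QG 1\<^esub> (p ^ i) = ?B [^]\<^bsub>QG 1\<^esub> (p ^ (2 * i))"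
        by (simp only: Q.nat_pow_pow[OF Bc] pp)
      finally have chain: "hh 1 (s (Suc i)) [^]\<^bsub>QG 1\<^esub> (p ^ i)
          = hh 1 (s i) [^]\<^bsub>QG 1\<^esub> (p ^ i) \<otimes>\<^bsub>QG 1\<^esub> ?B [^]\<^bsub>QG 1\<^esub> (p ^ (2 * i))" .
      have e: "hh 1 w0 [^]\<^bsub>QG 1\<^esub> (p ^ Suc (2 * i)) \<otimes>\<^bsub>QG 1\<^esub> ?B [^]\<^bsub>QG 1\<^esub> (p ^ (2 * i))
          = hh 1 w [^]\<^bsub>QG 1\<^esub> (p ^ Suc (2 * i))" using chain eq w0(2) by metis
      have "?B [^]\<^bsub>QG 1\<^esub> (p ^ (2 * i)) = inv\<^bsub>QG 1\<^esub> (hh 1 w0 [^]\<^bsub>QG 1\<^esub> (p ^ Suc (2 * i))) \<otimes>\<^bsub>QG 1\<^esub> hh 1 w [^]\<^bsub>QG 1\<^esub> (p ^ Suc (2 * i))"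
        using e[symmetric] Bc w0c wc by (simp add: Q.m_assoc[symmetric])
      also have "\<dots> = (inv\<^bsub>QG 1\<^esub> (hh 1 w0) \<otimes>\<^bsub>QG 1\<^esub> hh 1 w) [^]\<^bsub>QG 1\<^esub> (p ^ Suc (2 * i))"
        using Q.nat_pow_distrib Q.nat_pow_inv w0c wc by simp
      also have "\<dots> = hh 1 (inv w0 \<otimes> w) [^]\<^bsub>QG 1\<^esub> (p ^ Suc (2 * i))"
        using w0 w by (simp add: hh_mult hh_inv)
      finally show False using b[of "2 * i"] w0 w by blast
    qed
  next
    case False
    have ai: "a i = \<one>" using False by (simp add: a_def A_def)
    have "s (Suc i) = s i" using sSuc[of i] ai sc by simp
    then show ?thesis using False w by auto
  qed
  define W where "W = Wd a p"
  show ?thesis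
  proof (intro exI conjI)
    show "\<forall>w\<in>range W. word_over G w"
      using ac by (auto simp: W_def Wd_def word_over_def)
    show "unimodular (range W)" unfolding W_def by (rule unimodular_Wd)
    show "\<not> (\<exists>f. solution_in G (range W) f)"
    proof
      assume "\<exists>f. solution_in G (range W) f"
      then obtain f where fc: "\<And>x. f x \<in> carrier G" and fe: "\<And>i. eval_word G f (W i) = \<one>"
        unfolding solution_in_def by blast
      have rel: "f i = a i \<otimes> f (Suc i) [^] p" for i
      proof -
        have eq: "inv (f i) \<otimes> (a i \<otimes> f (Suc i) [^] p) = \<one>" using fe[of i] eval_Wd[OF fc ac] by (simp add: W_def)
        have "a i \<otimes> f (Suc i) [^] p = f i \<otimes> (inv (f i) \<otimes> (a i \<otimes> f (Suc i) [^] p))"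
          using fc ac by simp
        then show ?thesis using eq fc by simp
      qed
      let ?X = "\<lambda>i. hh 1 (f i)"
      have Xc: "?X i \<in> carrier (QG 1)" for i using fc hh_closed by blast
      have Sc: "hh 1 (s i) \<in> carrier (QG 1)" for i using sc hh_closed by blast
      have Ac1: "hh 1 (a i) \<in> carrier (QG 1)" for i using ac hh_closed by blast
      have claim: "?X 0 = hh 1 (s N) \<otimes>\<^bsub>QG 1\<^esub> ?X N [^]\<^bsub>QG 1\<^esub> (p ^ N)" for N
      proof (induction N)
        case 0
        then show ?case using Xc by (simp add: s0)
      next
        case (Suc N)
        have "?X N = hh 1 (a N) \<otimes>\<^bsub>QG 1\<^esub> ?X (Suc N) [^]\<^bsub>QG 1\<^esub> p"
          using rel[of N] fc ac by (simp add: hh_mult hh_pow)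
        then have "?X N [^]\<^bsub>QG 1\<^esub> (p ^ N) = hh 1 (a N) [^]\<^bsub>QG 1\<^esub> (p ^ N) \<otimes>\<^bsub>QG 1\<^esub> ?X (Suc N) [^]\<^bsub>QG 1\<^esub> (p ^ Suc N)"
          using Q.nat_pow_distrib[OF Ac1 Q.nat_pow_closed[OF Xc]] Q.nat_pow_pow Xc Ac1 by (simp add: mult.commute)
        moreover have "hh 1 (s (Suc N)) = hh 1 (s N) \<otimes>\<^bsub>QG 1\<^esub> hh 1 (a N) [^]\<^bsub>QG 1\<^esub> (p ^ N)"
          using sSuc[of N] sc ac by (simp add: hh_mult hh_pow)
        ultimately show ?case using Suc.IH Xc Sc Ac1 by (simp add: Q.m_assoc)
      qed
      obtain M where M: "f 0 [^] (p ^ M) = \<one>" using pg' fc by blast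
      define N where "N = Suc M"
      have "\<one>\<^bsub>QG 1\<^esub> = ?X 0 [^]\<^bsub>QG 1\<^esub> (p ^ M)" using M fc by (simp add: hh_pow[symmetric])
      also have "\<dots> = hh 1 (s N) [^]\<^bsub>QG 1\<^esub> (p ^ M) \<otimes>\<^bsub>QG 1\<^esub> ?X N [^]\<^bsub>QG 1\<^esub> (p ^ N * p ^ M)"
        using claim[of N] Q.nat_pow_distrib[OF Sc Q.nat_pow_closed[OF Xc]] Q.nat_pow_pow Xc Sc by simp
      finally have e: "\<one>\<^bsub>QG 1\<^esub> = hh 1 (s N) [^]\<^bsub>QG 1\<^esub> (p ^ M) \<otimes>\<^bsub>QG 1\<^esub> ?X N [^]\<^bsub>QG 1\<^esub> (p ^ N * p ^ M)" .
      have pp: "p ^ N * p ^ M = p ^ Suc (2 * M)" by (simp add: N_def power_add[symmetric] mult_2)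
      have "hh 1 (s N) [^]\<^bsub>QG 1\<^esub> (p ^ M) = inv\<^bsub>QG 1\<^esub> (?X N [^]\<^bsub>QG 1\<^esub> (p ^ N * p ^ M))"
        using e Xc Sc by (metis Q.inv_equality Q.nat_pow_closed)
      also have "\<dots> = hh 1 (inv (f N)) [^]\<^bsub>QG 1\<^esub> (p ^ Suc (2 * M))"
        using pp Q.nat_pow_inv Xc fc by (simp add: hh_inv)
      finally show False using sinv[of "inv (f N)" M] fc N_def by simp
    qed
  qed
qed


theorem lemma3:
  fixes G :: "('a, 'b) monoid_scheme" and p :: nat
  assumes "Factorial_Ring.prime p"
    and "nilpotent_group G"
    and "p_group p G"
    and "reduced_group G"
    and "unbounded_period G"
  shows "\<exists>E :: ('a, nat) word set.
           (\<forall>w\<in>E. word_over G w) \<and> unimodular E \<and> \<not> (\<exists>f. solution_in G E f)"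
proof -
  have grp: "group G" using assms(2) unfolding nilpotent_group_def by blast
  obtain c where c: "lower_central G c = {\<one>\<^bsub>G\<^esub>}" using assms(2) unfolding nilpotent_group_def by blast
  show ?thesis by (rule group.main_aux[OF grp assms(1) c assms(3) assms(4) assms(5)])
qed

end
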